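(* Let $V$ be a finitely generated $\mathrm{FS}^{\mathrm{op}}$-module over $\mathbb Z$. Then there exists an integer $e_V\ge 1$ such that for every $n\ge0$ the torsion subgroup of $V_n$ is annihilated by $e_V$ (i.e. its exponent divides $e_V$).
   Context: $\mathrm{FS}$ is the category whose objects are the sets $[n]=\{1,\dots,n\}$, $n\ge0$, and whose morphisms are all surjective maps. An $\mathrm{FS}^{\mathrm{op}}$-module over a ring $R$ is a functor $V:\mathrm{FS}^{\mathrm{op}}\to R\text{-Mod}$, with $V_n:=V([n])$; equivalently a family of $RS_n$-modules $V_n$ with compatible maps $V_b\to V_a$ for each surjection $[a]\to[b]$. $V$ is finitely generated if there is a finite set of elements of $\bigcup_n V_n$ not contained in any proper $\mathrm{FS}^{\mathrm{op}}$-submodule of $V$. (Known fact used: over a Noetherian ring, submodules of finitely generated $\mathrm{FS}^{\mathrm{op}}$-modules are finitely generated.) *)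

theory Defs
  imports Main
begin

text \<open>The object [n] of FS is {1..n}; a morphism [a] -> [b] is a function
  f :: nat => nat with f ` {1..a} = {1..b} (only its values on {1..a} matter).\<close>

definition FS_mor :: "nat \<Rightarrow> nat \<Rightarrow> (nat \<Rightarrow> nat) \<Rightarrow> bool" where
  "FS_mor a b f \<longleftrightarrow> f ` {1..a} = {1..b}"

definition subgrp :: "'m::ab_group_add set \<Rightarrow> bool" where
  "subgrp A \<longleftrightarrow> 0 \<in> A \<and> (\<forall>x\<in>A. \<forall>y\<in>A. x + y \<in> A) \<and> (\<forall>x\<in>A. - x \<in> A)"

definition FSop_module ::
  "(nat \<Rightarrow> 'm::ab_group_add set) \<Rightarrow> (nat \<Rightarrow> nat \<Rightarrow> (nat \<Rightarrow> nat) \<Rightarrow> 'm \<Rightarrow> 'm) \<Rightarrow> bool" where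
  "FSop_module V act \<longleftrightarrow>
     (\<forall>n. subgrp (V n)) \<and>
     (\<forall>a b f x. FS_mor a b f \<longrightarrow> x \<in> V b \<longrightarrow> act a b f x \<in> V a) \<and>
     (\<forall>a b f x y. FS_mor a b f \<longrightarrow> x \<in> V b \<longrightarrow> y \<in> V b \<longrightarrow>
        act a b f (x + y) = act a b f x + act a b f y) \<and>
     (\<forall>a b f g x. FS_mor a b f \<longrightarrow> (\<forall>i\<in>{1..a}. f i = g i) \<longrightarrow> x \<in> V b \<longrightarrow>
        act a b f x = act a b g x) \<and>
     (\<forall>n x. x \<in> V n \<longrightarrow> act n n id x = x) \<and>
     (\<forall>a b c f g x. FS_mor a b f \<longrightarrow> FS_mor b c g \<longrightarrow> x \<in> V c \<longrightarrow>
        act a c (g \<circ> f) x = act a b f (act b c g x))"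

definition FSop_submodule ::
  "(nat \<Rightarrow> 'm::ab_group_add set) \<Rightarrow> (nat \<Rightarrow> nat \<Rightarrow> (nat \<Rightarrow> nat) \<Rightarrow> 'm \<Rightarrow> 'm)
     \<Rightarrow> (nat \<Rightarrow> 'm set) \<Rightarrow> bool" where
  "FSop_submodule V act W \<longleftrightarrow>
     (\<forall>n. W n \<subseteq> V n \<and> subgrp (W n)) \<and>
     (\<forall>a b f x. FS_mor a b f \<longrightarrow> x \<in> W b \<longrightarrow> act a b f x \<in> W a)"

definition FSop_fin_gen ::
  "(nat \<Rightarrow> 'm::ab_group_add set) \<Rightarrow> (nat \<Rightarrow> nat \<Rightarrow> (nat \<Rightarrow> nat) \<Rightarrow> 'm \<Rightarrow> 'm) \<Rightarrow> bool" where
  "FSop_fin_gen V act \<longleftrightarrow>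
     (\<exists>G. finite G \<and> (\<forall>(n, x)\<in>G. x \<in> V n) \<and>
        (\<forall>W. FSop_submodule V act W \<longrightarrow> (\<forall>(n, x)\<in>G. x \<in> W n) \<longrightarrow> (\<forall>n. W n = V n)))"

fun nsmul :: "nat \<Rightarrow> 'm::monoid_add \<Rightarrow> 'm" where
  "nsmul 0 x = 0"
| "nsmul (Suc k) x = x + nsmul k x"

definition torsion :: "'m::ab_group_add set \<Rightarrow> 'm set" where
  "torsion A = {x \<in> A. \<exists>k::nat. k \<ge> 1 \<and> nsmul k x = 0}"

end

theory Submission
  imports Defs "HOL-Library.Sublist" "HOL-Library.Infinite_Set" "HOL-Library.List_Lexorder"
    "HOL-Library.Product_Lexorder" "HOL-Library.Ramsey"
begin


lemma nsmul_add: "nsmul (a + b) x = nsmul a x + nsmul b (x::'m::ab_group_add)"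
  by (induction a) (auto simp: add.assoc)

lemma nsmul_plus: "nsmul k (x + y) = nsmul k x + nsmul k (y::'m::ab_group_add)"
  by (induction k) (auto simp: algebra_simps)

lemma nsmul_zero [simp]: "nsmul k (0::'m::ab_group_add) = 0"
  by (induction k) auto

lemma nsmul_neg: "nsmul k (- x) = - nsmul k (x::'m::ab_group_add)"
  by (induction k) (auto simp: algebra_simps)

lemma nsmul_minus: "nsmul k (x - y) = nsmul k x - nsmul k (y::'m::ab_group_add)"
  using nsmul_plus[of k x "-y"] nsmul_neg[of k y] by simp

lemma nsmul_mult: "nsmul (a * b) x = nsmul a (nsmul b (x::'m::ab_group_add))"
  by (induction a) (auto simp: nsmul_add nsmul_plus)

lemma nsmul_one [simp]: "nsmul 1 x = (x::'m::ab_group_add)"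
  by simp

definition zsmul :: "int \<Rightarrow> 'm::ab_group_add \<Rightarrow> 'm" where
  "zsmul q x = (if 0 \<le> q then nsmul (nat q) x else - nsmul (nat (- q)) x)"

lemma zsmul_diff: "zsmul (int a - int b) x = nsmul a x - nsmul b x"
proof (cases "b \<le> a")
  case True
  then have "int a - int b = int (a - b)" by simp
  moreover have "nsmul a x = nsmul (a - b) x + nsmul b x" using True nsmul_add[of "a-b" b x] by simp
  ultimately show ?thesis unfolding zsmul_def by (simp only: if_True of_nat_0_le_iff nat_int) simp
next
  case False
  then have "int a - int b = - int (b - a)" by simp
  moreover have "nsmul b x = nsmul (b - a) x + nsmul a x" using False nsmul_add[of "b-a" a x] by simp
  moreover have "\<not> 0 \<le> - int (b - a)" using False by simp
  ultimately show ?thesis unfolding zsmul_def by (simp only: if_False minus_minus nat_int) simp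
qed

lemma zsmul_nat: "zsmul (int a) x = nsmul a x"
  using zsmul_diff[of a 0 x] by simp

lemma zsmul_add: "zsmul (p + q) x = zsmul p x + zsmul q x"
proof -
  obtain a b where p: "p = int a - int b" using int_diff_cases by blast
  obtain c d where q: "q = int c - int d" using int_diff_cases by blast
  have "p + q = int (a + c) - int (b + d)" unfolding p q by simp
  then have "zsmul (p + q) x = nsmul (a + c) x - nsmul (b + d) x" by (simp only: zsmul_diff)
  also have "\<dots> = zsmul p x + zsmul q x" unfolding p q zsmul_diff nsmul_add by (simp add: algebra_simps)
  finally show ?thesis .
qed

lemma zsmul_0 [simp]: "zsmul 0 x = 0"
  by (simp add: zsmul_def)

lemma zsmul_1 [simp]: "zsmul 1 x = x"
  by (simp add: zsmul_def)

lemma zsmul_uminus: "zsmul (- p) x = - zsmul p x"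
  using zsmul_add[of p "-p" x] by (simp add: eq_neg_iff_add_eq_0 add.commute)

lemma zsmul_zero [simp]: "zsmul q 0 = 0"
  by (simp add: zsmul_def)

lemma zsmul_plus: "zsmul q (x + y) = zsmul q x + zsmul q y"
proof -
  obtain a b where q: "q = int a - int b" using int_diff_cases by blast
  show ?thesis unfolding q zsmul_diff nsmul_plus by (simp add: algebra_simps)
qed

lemma zsmul_minus: "zsmul q (x - y) = zsmul q x - zsmul q y"
  using zsmul_plus[of q x "-y"] zsmul_plus[of q "-y" y] by (simp add: algebra_simps)

lemma zsmul_nsmul: "zsmul q (nsmul k x) = nsmul k (zsmul q x)"
proof -
  obtain a b where q: "q = int a - int b" using int_diff_cases by blast
  show ?thesis unfolding q zsmul_diff nsmul_minus nsmul_mult[symmetric] by (simp add: mult.commute)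
qed

lemma zsmul_mult: "zsmul (p * q) x = zsmul p (zsmul q x)"
proof -
  obtain a b where p: "p = int a - int b" using int_diff_cases by blast
  obtain c d where q: "q = int c - int d" using int_diff_cases by blast
  have "p * q = int (a*c + b*d) - int (a*d + b*c)" unfolding p q by (simp add: algebra_simps)
  then have "zsmul (p*q) x = nsmul (a*c + b*d) x - nsmul (a*d + b*c) x" by (simp only: zsmul_diff)
  also have "\<dots> = zsmul p (zsmul q x)" unfolding p q zsmul_diff nsmul_add nsmul_mult nsmul_minus
    by (simp add: algebra_simps)
  finally show ?thesis .
qed

lemma zsmul_sum_int: fixes x :: "'m::ab_group_add" shows "finite I \<Longrightarrow> zsmul (\<Sum>i\<in>I. f i) x = (\<Sum>i\<in>I. zsmul (f i) x)"
  by (induction I rule: finite_induct) (auto simp: zsmul_add)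

lemma zsmul_sum_vec: fixes f :: "'a \<Rightarrow> 'm::ab_group_add" shows "finite I \<Longrightarrow> zsmul q (\<Sum>i\<in>I. f i) = (\<Sum>i\<in>I. zsmul q (f i))"
  by (induction I rule: finite_induct) (auto simp: zsmul_plus)

lemma nsmul_sum_vec: fixes f :: "'a \<Rightarrow> 'm::ab_group_add" shows "finite I \<Longrightarrow> nsmul q (\<Sum>i\<in>I. f i) = (\<Sum>i\<in>I. nsmul q (f i))"
  by (induction I rule: finite_induct) (auto simp: nsmul_plus)

lemma nsmul_in: "subgrp S \<Longrightarrow> x \<in> S \<Longrightarrow> nsmul k x \<in> S"
  by (induction k) (auto simp: subgrp_def)

lemma zsmul_in: "subgrp S \<Longrightarrow> x \<in> S \<Longrightarrow> zsmul q x \<in> S"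
  by (auto simp: zsmul_def nsmul_in subgrp_def)

lemma sum_in: "subgrp S \<Longrightarrow> (\<And>i. i \<in> I \<Longrightarrow> f i \<in> S) \<Longrightarrow> sum f I \<in> S"
  by (induction I rule: infinite_finite_induct) (auto simp: subgrp_def)

lemma hom_zero:
  fixes \<phi> :: "'a::ab_group_add \<Rightarrow> 'b::ab_group_add"
  assumes "subgrp S" "\<forall>x\<in>S. \<forall>y\<in>S. \<phi> (x + y) = \<phi> x + \<phi> y"
  shows "\<phi> 0 = 0"
proof -
  have "0 \<in> S" using assms(1) by (simp add: subgrp_def)
  then have "\<phi> (0 + 0) = \<phi> 0 + \<phi> 0" using assms(2) by blast
  then show ?thesis by simp
qed

lemma hom_neg:
  fixes \<phi> :: "'a::ab_group_add \<Rightarrow> 'b::ab_group_add"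
  assumes "subgrp S" "\<forall>x\<in>S. \<forall>y\<in>S. \<phi> (x + y) = \<phi> x + \<phi> y" "x \<in> S"
  shows "\<phi> (- x) = - \<phi> x"
proof -
  have "- x \<in> S" using assms by (simp add: subgrp_def)
  then have "\<phi> (x + - x) = \<phi> x + \<phi> (- x)" using assms by blast
  then show ?thesis using hom_zero[OF assms(1,2)] by (simp add: eq_neg_iff_add_eq_0 add.commute)
qed

lemma hom_nsmul:
  fixes \<phi> :: "'a::ab_group_add \<Rightarrow> 'b::ab_group_add"
  assumes "subgrp S" "\<forall>x\<in>S. \<forall>y\<in>S. \<phi> (x + y) = \<phi> x + \<phi> y" "x \<in> S"
  shows "\<phi> (nsmul k x) = nsmul k (\<phi> x)"
proof (induction k)
  case 0 then show ?case using hom_zero[OF assms(1,2)] by simp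
next
  case (Suc k)
  have "nsmul k x \<in> S" using nsmul_in assms by blast
  then show ?case using Suc assms by simp
qed

lemma hom_zsmul:
  fixes \<phi> :: "'a::ab_group_add \<Rightarrow> 'b::ab_group_add"
  assumes "subgrp S" "\<forall>x\<in>S. \<forall>y\<in>S. \<phi> (x + y) = \<phi> x + \<phi> y" "x \<in> S"
  shows "\<phi> (zsmul q x) = zsmul q (\<phi> x)"
proof -
  have "nsmul k x \<in> S" for k using nsmul_in assms by blast
  then show ?thesis using assms hom_nsmul[OF assms] hom_neg[OF assms(1,2)]
    by (simp add: zsmul_def)
qed

lemma hom_sum:
  fixes \<phi> :: "'a::ab_group_add \<Rightarrow> 'b::ab_group_add"
  assumes "subgrp S" "\<forall>x\<in>S. \<forall>y\<in>S. \<phi> (x + y) = \<phi> x + \<phi> y" "\<And>i. i \<in> I \<Longrightarrow> f i \<in> S"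
  shows "\<phi> (sum f I) = (\<Sum>i\<in>I. \<phi> (f i))"
  using assms(3)
proof (induction I rule: infinite_finite_induct)
  case (infinite A) then show ?case using hom_zero[OF assms(1,2)] by simp
next
  case empty then show ?case using hom_zero[OF assms(1,2)] by simp
next
  case (insert x F)
  have "sum f F \<in> S" using sum_in[OF assms(1)] insert by blast
  moreover have "f x \<in> S" using insert by blast
  ultimately have "\<phi> (f x + sum f F) = \<phi> (f x) + \<phi> (sum f F)" using assms(2) by blast
  moreover have "\<phi> (sum f F) = (\<Sum>i\<in>F. \<phi> (f i))" using insert.IH insert.prems by blast
  ultimately show ?case using insert.hyps by (metis sum.insert)
qed

lemma torsion_iff: "x \<in> torsion A \<longleftrightarrow> x \<in> A \<and> (\<exists>k. k \<ge> 1 \<and> nsmul k x = 0)"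
  by (simp add: torsion_def)

lemma torsion_diff:
  assumes S: "subgrp S" and x: "x \<in> torsion S" and y: "y \<in> torsion S"
  shows "x - zsmul q y \<in> torsion S"
proof -
  obtain k1 where k1: "k1 \<ge> 1" "nsmul k1 x = 0" using x by (auto simp: torsion_iff)
  obtain k2 where k2: "k2 \<ge> 1" "nsmul k2 y = 0" using y by (auto simp: torsion_iff)
  have xS: "x \<in> S" and yS: "y \<in> S" using x y by (auto simp: torsion_iff)
  have "zsmul q y \<in> S" using zsmul_in[OF S yS] .
  then have "- zsmul q y \<in> S" using S unfolding subgrp_def by blast
  then have "x + - zsmul q y \<in> S" using S xS unfolding subgrp_def by blast
  then have "x - zsmul q y \<in> S" by simp
  moreover have "nsmul (k2 * k1) x = 0" by (simp add: nsmul_mult k1)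
  moreover have "nsmul (k2 * k1) y = 0" by (simp add: nsmul_mult k2 mult.commute[of k2 k1])
  moreover have "k2 * k1 \<ge> 1" using k1 k2 by simp
  moreover have "nsmul (k2*k1) (x - zsmul q y) = 0"
    by (simp only: nsmul_minus zsmul_nsmul[symmetric] \<open>nsmul (k2 * k1) x = 0\<close> \<open>nsmul (k2 * k1) y = 0\<close> zsmul_zero diff_zero)
  ultimately show ?thesis unfolding torsion_iff by blast
qed




definition badA :: "'a set \<Rightarrow> (nat \<Rightarrow> 'a list) \<Rightarrow> bool" where
  "badA A f \<longleftrightarrow> (\<forall>i. set (f i) \<subseteq> A) \<and> (\<forall>i j. i < j \<longrightarrow> \<not> subseq (f i) (f j))"

definition extA :: "'a set \<Rightarrow> 'a list list \<Rightarrow> bool" where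
  "extA A p \<longleftrightarrow> (\<exists>f. badA A f \<and> (\<forall>i<length p. f i = p ! i))"

definition chooseA :: "'a set \<Rightarrow> 'a list list \<Rightarrow> 'a list" where
  "chooseA A p = (SOME w. extA A (p @ [w]) \<and> (\<forall>w'. extA A (p @ [w']) \<longrightarrow> length w \<le> length w'))"

primrec preA :: "'a set \<Rightarrow> nat \<Rightarrow> 'a list list" where
  "preA A 0 = []"
| "preA A (Suc n) = preA A n @ [chooseA A (preA A n)]"

lemma chooseA_prop:
  assumes "extA A p"
  shows "extA A (p @ [chooseA A p]) \<and> (\<forall>w'. extA A (p @ [w']) \<longrightarrow> length (chooseA A p) \<le> length w')"
proof -
  from assms obtain f where f: "badA A f" "\<forall>i<length p. f i = p ! i" unfolding extA_def by blast
  have "extA A (p @ [f (length p)])" unfolding extA_def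
    using f by (intro exI[of _ f]) (auto simp: nth_append less_Suc_eq)
  then obtain w where "extA A (p @ [w]) \<and> (\<forall>w'. extA A (p @ [w']) \<longrightarrow> length w \<le> length w')"
    using ex_has_least_nat[of "\<lambda>w. extA A (p @ [w])" _ length] by blast
  then show ?thesis unfolding chooseA_def by (rule someI)
qed

lemma preA_len: "length (preA A n) = n"
  by (induction n) auto

lemma preA_ext: "extA A [] \<Longrightarrow> extA A (preA A n)"
  by (induction n) (auto dest: chooseA_prop)

lemma preA_nth: "i < n \<Longrightarrow> preA A n ! i = chooseA A (preA A i)"
proof (induction n)
  case 0 then show ?case by simp
next
  case (Suc n)
  then show ?case by (cases "i < n") (auto simp: nth_append preA_len less_Suc_eq)
qed

lemma higman:
  fixes f :: "nat \<Rightarrow> 'a list"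
  assumes A: "finite A" and fA: "\<forall>i. set (f i) \<subseteq> A"
  shows "\<exists>i j. i < j \<and> subseq (f i) (f j)"
proof (rule ccontr)
  assume "\<not> ?thesis"
  then have "badA A f" using fA unfolding badA_def by blast
  then have e0: "extA A []" unfolding extA_def by auto
  define m where "m n = chooseA A (preA A n)" for n
  have ext: "extA A (preA A n)" for n using preA_ext[OF e0] .
  have mprop: "extA A (preA A (Suc n)) \<and> (\<forall>w'. extA A (preA A n @ [w']) \<longrightarrow> length (m n) \<le> length w')" for n
    using chooseA_prop[OF ext[of n]] by (simp add: m_def)
  have agree: "\<exists>g. badA A g \<and> (\<forall>i<n. g i = m i)" for n
  proof -
    from ext[of n] obtain g where "badA A g" "\<forall>i<length (preA A n). g i = preA A n ! i"
      unfolding extA_def by blast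
    then show ?thesis by (auto simp: preA_len preA_nth m_def)
  qed
  have mbad: "badA A m"
  proof -
    have "set (m i) \<subseteq> A" for i
    proof -
      obtain g where "badA A g" "\<forall>k<Suc i. g k = m k" using agree[of "Suc i"] by blast
      then show ?thesis unfolding badA_def by (metis lessI)
    qed
    moreover have "\<not> subseq (m i) (m j)" if "i < j" for i j
    proof -
      obtain g where "badA A g" "\<forall>k<Suc j. g k = m k" using agree[of "Suc j"] by blast
      moreover have "g i = m i" "g j = m j" using that \<open>\<forall>k<Suc j. g k = m k\<close> by auto
      ultimately show ?thesis using that unfolding badA_def by metis
    qed
    ultimately show ?thesis unfolding badA_def by blast
  qed
  have ne: "m i \<noteq> []" for i
  proof
    assume "m i = []"
    then have "subseq (m i) (m (Suc i))" by simp
    with mbad show False unfolding badA_def by auto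
  qed
  have hdA: "hd (m i) \<in> A" for i using mbad ne unfolding badA_def
    by (meson hd_in_set subsetD)
  have "finite ((\<lambda>i. hd (m i)) ` UNIV)" using hdA A
    by (meson finite_subset image_subset_iff)
  then obtain i0 where inf: "infinite {i. hd (m i) = hd (m i0)}"
    using pigeonhole_infinite[of "UNIV::nat set" "\<lambda>i. hd (m i)"] by auto
  define a where "a = hd (m i0)"
  define I where "I = {i. hd (m i) = a}"
  have infI: "infinite I" using inf unfolding I_def a_def .
  define \<phi> where "\<phi> = enumerate I"
  have smono: "strict_mono \<phi>" unfolding \<phi>_def using infI by (rule strict_mono_enumerate)
  have phiI: "hd (m (\<phi> k)) = a" for k using enumerate_in_set[OF infI, of k] unfolding \<phi>_def I_def by simp
  have mphi: "m (\<phi> k) = a # tl (m (\<phi> k))" for k using phiI[of k] ne[of "\<phi> k"]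
    by (metis list.collapse)
  define g where "g i = (if i < \<phi> 0 then m i else tl (m (\<phi> (i - \<phi> 0))))" for i
  have phige: "\<phi> 0 \<le> \<phi> k" for k using smono by (simp add: strict_mono_less_eq)
  have gbad: "badA A g"
  proof -
    have "set (g i) \<subseteq> A" for i
      using mbad unfolding badA_def g_def by (auto, meson in_mono list.set_sel(2) ne)
    moreover have "\<not> subseq (g i) (g j)" if ij: "i < j" for i j
    proof
      assume sub: "subseq (g i) (g j)"
      show False
      proof (cases "j < \<phi> 0")
        case True
        then show False using sub ij mbad unfolding badA_def g_def by auto
      next
        case jF: False
        show False
        proof (cases "i < \<phi> 0")
          case True
          then have "subseq (m i) (tl (m (\<phi> (j - \<phi> 0))))" using sub jF unfolding g_def by simp
          then have "subseq (m i) (m (\<phi> (j - \<phi> 0)))"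
            by (metis mphi list_emb_Cons)
          moreover have "i < \<phi> (j - \<phi> 0)" using True phige[of "j - \<phi> 0"] by simp
          ultimately show False using mbad unfolding badA_def by blast
        next
          case False
          then have "subseq (tl (m (\<phi> (i - \<phi> 0)))) (tl (m (\<phi> (j - \<phi> 0))))"
            using sub jF unfolding g_def by simp
          then have "subseq (a # tl (m (\<phi> (i - \<phi> 0)))) (a # tl (m (\<phi> (j - \<phi> 0))))"
            by simp
          then have "subseq (m (\<phi> (i - \<phi> 0))) (m (\<phi> (j - \<phi> 0)))" using mphi by metis
          moreover have "\<phi> (i - \<phi> 0) < \<phi> (j - \<phi> 0)" using smono ij False
            by (simp add: strict_mono_less)
          ultimately show False using mbad unfolding badA_def by blast
        qed
      qed
    qed
    ultimately show ?thesis unfolding badA_def by blast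
  qed
  have "extA A (preA A (\<phi> 0) @ [tl (m (\<phi> 0))])"
    unfolding extA_def
  proof (intro exI[of _ g] conjI allI impI)
    show "badA A g" by (rule gbad)
    fix i assume "i < length (preA A (\<phi> 0) @ [tl (m (\<phi> 0))])"
    then have "i \<le> \<phi> 0" by (simp add: preA_len)
    then show "g i = (preA A (\<phi> 0) @ [tl (m (\<phi> 0))]) ! i"
      by (cases "i = \<phi> 0") (auto simp: g_def nth_append preA_len preA_nth m_def)
  qed
  then have "length (m (\<phi> 0)) \<le> length (tl (m (\<phi> 0)))" using mprop[of "\<phi> 0"] by blast
  then show False using ne[of "\<phi> 0"] by (cases "m (\<phi> 0)") auto
qed




definition fw :: "nat list \<Rightarrow> nat \<Rightarrow> nat" where
  "fw w i = w ! (i - 1)"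

definition wcomp :: "(nat \<Rightarrow> nat) \<Rightarrow> nat \<Rightarrow> nat list \<Rightarrow> nat list" where
  "wcomp h m w = map (\<lambda>i. w ! (h i - 1)) [1..<Suc m]"

definition ordered :: "nat \<Rightarrow> (nat \<Rightarrow> nat) \<Rightarrow> bool" where
  "ordered m h \<longleftrightarrow> (\<forall>q\<in>{1..m}. h q \<in> h ` {1..<q} \<or> (\<forall>p\<in>{1..<q}. h p < h q))"

lemma comp_length [simp]: "length (wcomp h m w) = m"
  by (simp add: wcomp_def)

lemma comp_nth: "i < m \<Longrightarrow> wcomp h m w ! i = w ! (h (Suc i) - 1)"
  by (simp add: wcomp_def del: upt_Suc)

lemma set_comp_img: "set (wcomp h m w) = (\<lambda>i. w ! (h i - 1)) ` {1..m}"
  by (simp add: wcomp_def atLeastLessThanSuc_atLeastAtMost del: upt_Suc)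

lemma set_conv_fw: "set w = fw w ` {1..length w}"
proof -
  have "set w = (\<lambda>i. w ! i) ` {..<length w}" by (auto simp: in_set_conv_nth)
  also have "\<dots> = fw w ` (Suc ` {..<length w})"
    by (simp add: image_image fw_def)
  also have "Suc ` {..<length w} = {1..length w}"
    by (rule image_Suc_lessThan)
  finally show ?thesis .
qed

lemma FS_mor_fw: "length w = n \<Longrightarrow> set w = {1..d} \<Longrightarrow> FS_mor n d (fw w)"
  using set_conv_fw[of w] by (simp add: FS_mor_def)

lemma set_comp:
  assumes "FS_mor m n h" "length w = n"
  shows "set (wcomp h m w) = set w"
proof -
  have "set (wcomp h m w) = (\<lambda>i. w ! (i - 1)) ` (h ` {1..m})"
    by (simp add: set_comp_img image_image)
  also have "\<dots> = fw w ` {1..n}" using assms by (simp add: FS_mor_def fw_def)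
  also have "\<dots> = set w" using set_conv_fw[of w] assms by simp
  finally show ?thesis .
qed

lemma fw_comp: "i \<in> {1..m} \<Longrightarrow> fw (wcomp h m w) i = fw w (h i)"
  by (auto simp: fw_def comp_nth)

lemma FS_mor_range: "FS_mor m n h \<Longrightarrow> i \<in> {1..m} \<Longrightarrow> h i \<in> {1..n}"
  by (auto simp: FS_mor_def)

lemma lex_same_len:
  fixes x y :: "'a::linorder list"
  assumes "length x = length y"
  shows "x < y \<longleftrightarrow> (\<exists>i<length x. (\<forall>j<i. x ! j = y ! j) \<and> x ! i < y ! i)"
proof -
  have tk: "take i x = take i y \<longleftrightarrow> (\<forall>j<i. x ! j = y ! j)" if "i < length x" for i
    using that assms by (auto simp: list_eq_iff_nth_eq min_def)
  show ?thesis
    using assms tk unfolding list_less_def lexord_take_index_conv by auto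
qed

lemma comp_mono:
  assumes h: "FS_mor m n h" "ordered m h" and len: "length w1 = n" "length w2 = n"
    and lt: "w1 < w2"
  shows "wcomp h m w1 < wcomp h m w2"
proof -
  obtain i where i: "i < n" "\<forall>j<i. w1 ! j = w2 ! j" "w1 ! i < w2 ! i"
    using lt len lex_same_len[of w1 w2] by auto
  have "Suc i \<in> h ` {1..m}" using h(1) i(1) by (auto simp: FS_mor_def)
  then have ex: "\<exists>q. q \<in> {1..m} \<and> h q = Suc i" by auto
  define k where "k = (LEAST q. q \<in> {1..m} \<and> h q = Suc i)"
  have k: "k \<in> {1..m}" "h k = Suc i" using LeastI_ex[OF ex] unfolding k_def by auto
  have notbef: "\<not> (p \<in> {1..<k} \<and> h p = Suc i)" for p
  proof
    assume p: "p \<in> {1..<k} \<and> h p = Suc i"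
    then have "p \<in> {1..m} \<and> h p = Suc i" using k by auto
    then have "k \<le> p" unfolding k_def by (rule Least_le)
    then show False using p by auto
  qed
  have before: "\<forall>p\<in>{1..<k}. h p < Suc i"
  proof -
    have "h k \<notin> h ` {1..<k}"
    proof
      assume "h k \<in> h ` {1..<k}"
      then obtain p where "p \<in> {1..<k}" "h p = h k" by auto
      then show False using notbef[of p] k by simp
    qed
    moreover have "h k \<in> h ` {1..<k} \<or> (\<forall>p\<in>{1..<k}. h p < h k)"
      using h(2) k(1) unfolding ordered_def by blast
    ultimately show ?thesis using k(2) by auto
  qed
  have "\<forall>j<k - 1. wcomp h m w1 ! j = wcomp h m w2 ! j"
  proof (intro allI impI)
    fix j assume j: "j < k - 1"
    then have "Suc j \<in> {1..<k}" by auto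
    then have "h (Suc j) < Suc i" using before by blast
    moreover have "h (Suc j) \<ge> 1" using FS_mor_range[OF h(1), of "Suc j"] j k by auto
    ultimately have "h (Suc j) - 1 < i" by simp
    moreover have "j < m" using j k by auto
    ultimately show "wcomp h m w1 ! j = wcomp h m w2 ! j" using i(2) by (simp add: comp_nth)
  qed
  moreover have "wcomp h m w1 ! (k - 1) < wcomp h m w2 ! (k - 1)"
  proof -
    have "k - 1 < m" "Suc (k - 1) = k" using k by auto
    then show ?thesis using k i by (simp add: comp_nth)
  qed
  moreover have "k - 1 < length (wcomp h m w1)" using k by auto
  ultimately have "\<exists>i<length (wcomp h m w1). (\<forall>j<i. wcomp h m w1 ! j = wcomp h m w2 ! j) \<and> wcomp h m w1 ! i < wcomp h m w2 ! i"
    by blast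
  moreover have eq: "length (wcomp h m w1) = length (wcomp h m w2)" by simp
  ultimately show ?thesis using lex_same_len[OF eq] by blast
qed




lemma list_emb_idx:
  "list_emb P xs ys \<Longrightarrow> \<exists>p. (\<forall>k<length xs. p k < length ys \<and> P (xs!k) (ys!(p k))) \<and>
      (\<forall>k1 k2. k1 < k2 \<longrightarrow> k2 < length xs \<longrightarrow> p k1 < p k2)"
proof (induction rule: list_emb.induct)
  case (list_emb_Nil ys)
  then show ?case by auto
next
  case (list_emb_Cons xs ys y)
  then obtain p where p: "\<forall>k<length xs. p k < length ys \<and> P (xs!k) (ys!(p k))"
    "\<forall>k1 k2. k1 < k2 \<longrightarrow> k2 < length xs \<longrightarrow> p k1 < p k2" by blast
  show ?case by (rule exI[of _ "\<lambda>k. Suc (p k)"]) (use p in auto)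
next
  case (list_emb_Cons2 x y xs ys)
  then obtain p where p: "\<forall>k<length xs. p k < length ys \<and> P (xs!k) (ys!(p k))"
    "\<forall>k1 k2. k1 < k2 \<longrightarrow> k2 < length xs \<longrightarrow> p k1 < p k2" by blast
  define p' where "p' k = (case k of 0 \<Rightarrow> 0 | Suc j \<Rightarrow> Suc (p j))" for k
  have "\<forall>k<length (x#xs). p' k < length (y#ys) \<and> P ((x#xs)!k) ((y#ys)!(p' k))"
  proof (intro allI impI)
    fix k assume "k < length (x#xs)"
    then show "p' k < length (y#ys) \<and> P ((x#xs)!k) ((y#ys)!(p' k))"
      using p(1) list_emb_Cons2.hyps(1) by (cases k) (auto simp: p'_def)
  qed
  moreover have "\<forall>k1 k2. k1 < k2 \<longrightarrow> k2 < length (x#xs) \<longrightarrow> p' k1 < p' k2"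
  proof (intro allI impI)
    fix k1 k2 assume "k1 < k2" "k2 < length (x#xs)"
    then show "p' k1 < p' k2" using p(2)
      by (cases k1; cases k2) (auto simp: p'_def)
  qed
  ultimately show ?case by blast
qed

lemma emb_to_h:
  assumes lu: "length u = n" and lv: "length v = m" and sets: "set u = set v"
    and pp: "\<forall>k<n. p k < m \<and> u!k = v!(p k) \<and> set (take k u) = set (take (p k) v)"
    and mono: "\<forall>k1 k2. k1 < k2 \<longrightarrow> k2 < n \<longrightarrow> p k1 < p k2"
  shows "\<exists>h. FS_mor m n h \<and> ordered m h \<and> wcomp h m u = v"
proof -
  have monole: "p k1 \<le> p k2" if "k1 \<le> k2" "k2 < n" for k1 k2
  proof (cases "k1 = k2")
    case False
    then have "k1 < k2" using that by simp
    then show ?thesis using mono that(2) by (simp add: less_imp_le)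
  qed simp
  have monoinv: "k1 < k2" if "p k1 < p k2" "k1 < n" "k2 < n" for k1 k2
    using monole[of k2 k1] that by (meson not_le)
  define E where "E q = {k. k < n \<and> p k < q \<and> u!k = v!(q-1)}" for q
  define g where "g q = (GREATEST k. k \<in> E q)" for q
  define h where "h q = Suc (g q)" for q
  have Ene: "\<exists>k. k \<in> E q" if q: "q \<in> {1..m}" for q
  proof -
    have "v \<noteq> []" using q lv by auto
    then have "set u \<noteq> {}" using sets by simp
    then have n0: "0 < n" using lu by auto
    have "set (take (p 0) v) = {}" using pp n0 by auto
    then have p0: "p 0 = 0" using pp n0 lv \<open>v \<noteq> []\<close> by auto
    define K where "K = (GREATEST k. k < n \<and> p k < q)"
    have K: "K < n \<and> p K < q" unfolding K_def
      by (rule GreatestI_nat[of _ 0 n]) (use n0 p0 q in auto)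
    have "v!(q-1) \<in> set (take (Suc K) u)"
    proof (cases "Suc K < n")
      case True
      have "\<not> (Suc K < n \<and> p (Suc K) < q)"
      proof
        assume "Suc K < n \<and> p (Suc K) < q"
        then have "Suc K \<le> K" unfolding K_def by (rule Greatest_le_nat[of _ _ n]) auto
        then show False by simp
      qed
      then have "q - 1 < p (Suc K)" using True q by auto
      moreover have "p (Suc K) < m" using pp True by auto
      ultimately have "v!(q-1) \<in> set (take (p (Suc K)) v)"
        using lv by (auto simp: in_set_conv_nth intro!: exI[of _ "q-1"])
      then show ?thesis using pp True by auto
    next
      case False
      then have "Suc K = n" using K by auto
      moreover have "v!(q-1) \<in> set v" using q lv by auto
      ultimately show ?thesis using sets lu by simp
    qed
    then obtain k' where k': "k' < Suc K" "u!k' = v!(q-1)"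
      using K lu by (auto simp: in_set_conv_nth)
    have "p k' \<le> p K" using monole k' K by auto
    then have "k' \<in> E q" using k' K unfolding E_def by auto
    then show ?thesis by blast
  qed
  have gE: "g q \<in> E q" if qm: "q \<in> {1..m}" for q
  proof -
    obtain k where "k \<in> E q" using Ene[OF qm] by blast
    then show ?thesis unfolding g_def by (rule GreatestI_nat[of _ _ n]) (auto simp: E_def)
  qed
  have gmax: "k \<le> g q" if "k \<in> E q" for k q
    unfolding g_def by (rule Greatest_le_nat[of _ _ n]) (use that in \<open>auto simp: E_def\<close>)
  have hp: "h (Suc (p k)) = Suc k" if k: "k < n" for k
  proof -
    have kin: "k \<in> E (Suc (p k))" using k pp unfolding E_def by auto
    have "p k < m" using pp k by blast
    then have "Suc (p k) \<in> {1..m}" by auto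
    then have "g (Suc (p k)) \<in> E (Suc (p k))" by (rule gE)
    then have "g (Suc (p k)) < n" "p (g (Suc (p k))) \<le> p k" unfolding E_def by auto
    then have "g (Suc (p k)) \<le> k" using mono k by (meson not_le)
    moreover have "k \<le> g (Suc (p k))" using gmax[OF kin] .
    ultimately show ?thesis unfolding h_def by simp
  qed
  have fs: "FS_mor m n h"
    unfolding FS_mor_def
  proof
    show "h ` {1..m} \<subseteq> {1..n}"
    proof
      fix y assume "y \<in> h ` {1..m}"
      then obtain q where q: "q \<in> {1..m}" "y = h q" by auto
      then have "g q < n" using gE[OF q(1)] by (simp add: E_def)
      then show "y \<in> {1..n}" using q by (simp add: h_def)
    qed
    show "{1..n} \<subseteq> h ` {1..m}"
    proof
      fix j assume j: "j \<in> {1..n}"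
      then have "h (Suc (p (j - 1))) = j" using hp[of "j-1"] by auto
      moreover have "j - 1 < n" using j by auto
      then have "p (j - 1) < m" using pp by blast
      then have "Suc (p (j - 1)) \<in> {1..m}" by auto
      ultimately show "j \<in> h ` {1..m}" by (metis image_eqI)
    qed
  qed
  have cv: "wcomp h m u = v"
  proof (rule nth_equalityI)
    show "length (wcomp h m u) = length v" using lv by simp
    fix i assume "i < length (wcomp h m u)"
    then have i: "i < m" by simp
    then have "g (Suc i) \<in> E (Suc i)" using gE[of "Suc i"] by auto
    then show "wcomp h m u ! i = v ! i" using i by (simp add: comp_nth h_def E_def)
  qed
  have ord: "ordered m h"
    unfolding ordered_def
  proof
    fix q assume q: "q \<in> {1..m}"
    let ?k = "g q"
    have kE: "?k < n" "p ?k < q" using gE[OF q] by (auto simp: E_def)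
    show "h q \<in> h ` {1..<q} \<or> (\<forall>p'\<in>{1..<q}. h p' < h q)"
    proof (cases "Suc (p ?k) = q")
      case True
      have "h p' < h q" if p': "p' \<in> {1..<q}" for p'
      proof -
        have "p' \<in> {1..m}" using p' q by auto
        then have "g p' \<in> E p'" by (rule gE)
        then have "g p' < n" "p (g p') < p'" by (auto simp: E_def)
        then have "p (g p') < p ?k" using p' True by auto
        then have "g p' < ?k" using monoinv \<open>g p' < n\<close> kE by blast
        then show ?thesis by (simp add: h_def)
      qed
      then show ?thesis by blast
    next
      case False
      then have "Suc (p ?k) \<in> {1..<q}" using kE by auto
      moreover have "h (Suc (p ?k)) = h q" using hp[OF kE(1)] by (simp add: h_def)
      ultimately show ?thesis by (metis image_eqI)
    qed
  qed
  show ?thesis using fs ord cv by blast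
qed




locale fsm =
  fixes V :: "nat \<Rightarrow> 'm::ab_group_add set"
    and act :: "nat \<Rightarrow> nat \<Rightarrow> (nat \<Rightarrow> nat) \<Rightarrow> 'm \<Rightarrow> 'm"
    and G :: "(nat \<times> 'm) set"
    and idx :: "nat \<times> 'm \<Rightarrow> nat"
  assumes modl: "FSop_module V act"
    and finG: "finite G"
    and GV: "\<forall>(n, x)\<in>G. x \<in> V n"
    and gen: "\<forall>W. FSop_submodule V act W \<longrightarrow> (\<forall>(n, x)\<in>G. x \<in> W n) \<longrightarrow> (\<forall>n. W n = V n)"
    and idx: "inj_on idx G"
begin

lemma sub: "subgrp (V n)" using modl by (simp add: FSop_module_def)
lemma act_in: "FS_mor a b f \<Longrightarrow> x \<in> V b \<Longrightarrow> act a b f x \<in> V a"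
  using modl by (simp add: FSop_module_def)
lemma act_add: "FS_mor a b f \<Longrightarrow> \<forall>x\<in>V b. \<forall>y\<in>V b. act a b f (x + y) = act a b f x + act a b f y"
  using modl by (simp add: FSop_module_def)
lemma act_cong: "FS_mor a b f \<Longrightarrow> (\<forall>i\<in>{1..a}. f i = g i) \<Longrightarrow> x \<in> V b \<Longrightarrow> act a b f x = act a b g x"
  using modl unfolding FSop_module_def by blast
lemma act_id: "x \<in> V n \<Longrightarrow> act n n id x = x"
  using modl by (simp add: FSop_module_def)
lemma act_comp: "FS_mor a b f \<Longrightarrow> FS_mor b c g \<Longrightarrow> x \<in> V c \<Longrightarrow> act a c (g \<circ> f) x = act a b f (act b c g x)"
  using modl unfolding FSop_module_def by blast

definition B :: "nat \<Rightarrow> ((nat \<times> 'm) \<times> nat list) set" where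
  "B n = {b. fst b \<in> G \<and> length (snd b) = n \<and> set (snd b) = {1..fst (fst b)}}"

lemma finite_B: "finite (B n)"
proof -
  have "B n \<subseteq> (\<Union>g\<in>G. {g} \<times> {w. set w \<subseteq> {1..fst g} \<and> length w = n})"
    unfolding B_def by auto
  moreover have "finite (\<Union>g\<in>G. {g} \<times> {w. set w \<subseteq> {1..fst g} \<and> length w = n})"
    using finG by (auto intro!: finite_lists_length_eq)
  ultimately show ?thesis by (rule finite_subset)
qed

definition vec :: "nat \<Rightarrow> (nat \<times> 'm) \<times> nat list \<Rightarrow> 'm" where
  "vec n b = act n (fst (fst b)) (fw (snd b)) (snd (fst b))"

lemma B_FS: "b \<in> B n \<Longrightarrow> FS_mor n (fst (fst b)) (fw (snd b))"
  unfolding B_def by (rule FS_mor_fw) simp_all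

lemma GV': "g \<in> G \<Longrightarrow> snd g \<in> V (fst g)"
  using GV by (cases g) auto

lemma B_gen: "b \<in> B n \<Longrightarrow> snd (fst b) \<in> V (fst (fst b))"
  using GV' by (simp add: B_def)

lemma vec_in: "b \<in> B n \<Longrightarrow> vec n b \<in> V n"
  unfolding vec_def using B_FS B_gen act_in by blast

definition pi :: "nat \<Rightarrow> ((nat \<times> 'm) \<times> nat list \<Rightarrow> int) \<Rightarrow> 'm" where
  "pi n c = (\<Sum>b\<in>B n. zsmul (c b) (vec n b))"

lemma pi_in: "pi n c \<in> V n"
  unfolding pi_def by (rule sum_in[OF sub]) (auto intro: zsmul_in[OF sub] vec_in)

lemma pi_cong: "(\<And>b. b \<in> B n \<Longrightarrow> c b = c' b) \<Longrightarrow> pi n c = pi n c'"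
  unfolding pi_def by (rule sum.cong) auto

lemma pi_zero: "pi n (\<lambda>b. 0) = 0"
  unfolding pi_def by simp

lemma pi_add: "pi n (\<lambda>b. c1 b + c2 b) = pi n c1 + pi n c2"
  unfolding pi_def by (simp add: zsmul_add sum.distrib)

lemma pi_neg: "pi n (\<lambda>b. - c b) = - pi n c"
  unfolding pi_def by (simp add: zsmul_uminus sum_negf)

lemma zsmul_diff_scale: "zsmul (a - q * r) v = zsmul a v - zsmul q (zsmul r v)"
proof -
  have "zsmul (a - q * r) v = zsmul (a + - (q * r)) v" by simp
  also have "\<dots> = zsmul a v + - zsmul (q * r) v" by (simp only: zsmul_add zsmul_uminus)
  also have "\<dots> = zsmul a v - zsmul q (zsmul r v)" by (simp only: zsmul_mult) simp
  finally show ?thesis .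
qed

lemma pi_diff_scale: "pi n (\<lambda>b. c1 b - q * c2 b) = pi n c1 - zsmul q (pi n c2)"
proof -
  have "pi n (\<lambda>b. c1 b - q * c2 b) = (\<Sum>b\<in>B n. zsmul (c1 b) (vec n b) - zsmul q (zsmul (c2 b) (vec n b)))"
    unfolding pi_def
    by (rule sum.cong) (simp_all only: zsmul_diff_scale)
  also have "\<dots> = pi n c1 - zsmul q (pi n c2)"
    unfolding pi_def by (simp add: sum_subtractf zsmul_sum_vec[OF finite_B])
  finally show ?thesis .
qed

definition compb :: "(nat \<Rightarrow> nat) \<Rightarrow> nat \<Rightarrow> (nat \<times> 'm) \<times> nat list \<Rightarrow> (nat \<times> 'm) \<times> nat list" where
  "compb h m b = (fst b, wcomp h m (snd b))"

lemma compb_in: "FS_mor m n h \<Longrightarrow> b \<in> B n \<Longrightarrow> compb h m b \<in> B m"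
  by (auto simp: B_def compb_def set_comp)

lemma vec_comp:
  assumes h: "FS_mor m n h" and b: "b \<in> B n"
  shows "vec m (compb h m b) = act m n h (vec n b)"
proof -
  have fs: "FS_mor m (fst (fst b)) (fw (wcomp h m (snd b)))"
    using B_FS[OF compb_in[OF h b]] by (simp add: compb_def)
  have "vec m (compb h m b) = act m (fst (fst b)) (fw (snd b) \<circ> h) (snd (fst b))"
    unfolding vec_def compb_def
    using act_cong[OF fs _ B_gen[OF b]] by (simp add: fw_comp)
  also have "\<dots> = act m n h (vec n b)"
    unfolding vec_def using act_comp[OF h B_FS[OF b] B_gen[OF b]] .
  finally show ?thesis .
qed

definition hstar :: "nat \<Rightarrow> nat \<Rightarrow> (nat \<Rightarrow> nat) \<Rightarrow> ((nat \<times> 'm) \<times> nat list \<Rightarrow> int) \<Rightarrow> (nat \<times> 'm) \<times> nat list \<Rightarrow> int" where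
  "hstar n m h c b' = (\<Sum>b\<in>{b \<in> B n. compb h m b = b'}. c b)"

lemma pi_hstar:
  assumes h: "FS_mor m n h"
  shows "pi m (hstar n m h c) = act m n h (pi n c)"
proof -
  have "pi m (hstar n m h c) = (\<Sum>b'\<in>B m. \<Sum>b\<in>{b \<in> B n. compb h m b = b'}. zsmul (c b) (vec m b'))"
    unfolding pi_def hstar_def
    by (rule sum.cong[OF refl], rule zsmul_sum_int) (rule finite_subset[OF _ finite_B], auto)
  also have "\<dots> = (\<Sum>b'\<in>B m. \<Sum>b\<in>{b \<in> B n. compb h m b = b'}. zsmul (c b) (vec m (compb h m b)))"
    by (rule sum.cong[OF refl], rule sum.cong) auto
  also have "\<dots> = (\<Sum>b\<in>B n. zsmul (c b) (vec m (compb h m b)))"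
    by (rule sum.group[OF finite_B finite_B]) (use compb_in[OF h] in auto)
  also have "\<dots> = (\<Sum>b\<in>B n. act m n h (zsmul (c b) (vec n b)))"
    by (rule sum.cong[OF refl]) (simp add: vec_comp[OF h] hom_zsmul[OF sub act_add[OF h] vec_in])
  also have "\<dots> = act m n h (pi n c)"
    unfolding pi_def
    by (rule hom_sum[OF sub act_add[OF h], symmetric]) (auto intro: zsmul_in[OF sub] vec_in)
  finally show ?thesis .
qed

end




context fsm
begin

definition W :: "nat \<Rightarrow> ((nat \<times> 'm) \<times> nat list \<Rightarrow> int) set" where
  "W n = {c. (\<forall>b. b \<notin> B n \<longrightarrow> c b = 0) \<and> pi n c \<in> torsion (V n)}"

lemma W_diff:
  assumes "c1 \<in> W n" "c2 \<in> W n"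
  shows "(\<lambda>b. c1 b - q * c2 b) \<in> W n"
proof -
  have "pi n (\<lambda>b. c1 b - q * c2 b) \<in> torsion (V n)"
    unfolding pi_diff_scale using assms torsion_diff[OF sub] by (simp add: W_def)
  then show ?thesis using assms by (simp add: W_def)
qed

lemma W_zero: "(\<lambda>b. 0) \<in> W n"
proof -
  have "(0::'m) \<in> V n" using sub by (simp add: subgrp_def)
  then show ?thesis by (auto simp: W_def pi_zero torsion_iff intro!: exI[of _ 1])
qed

lemma W_neg: "c \<in> W n \<Longrightarrow> (\<lambda>b. - c b) \<in> W n"
  using W_diff[OF W_zero, of c n 1] by simp

lemma hstar_W:
  assumes h: "FS_mor m n h" and c: "c \<in> W n"
  shows "hstar n m h c \<in> W m"
proof -
  have "hstar n m h c b' = 0" if "b' \<notin> B m" for b'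
  proof -
    have "{b \<in> B n. compb h m b = b'} = {}" using compb_in[OF h] that by auto
    then show ?thesis unfolding hstar_def by (simp only: sum.empty)
  qed
  moreover have "pi m (hstar n m h c) \<in> torsion (V m)"
  proof -
    have t: "pi n c \<in> torsion (V n)" using c by (simp add: W_def)
    then obtain k where k: "k \<ge> 1" "nsmul k (pi n c) = 0" by (auto simp: torsion_iff)
    have "nsmul k (act m n h (pi n c)) = act m n h (nsmul k (pi n c))"
      using hom_nsmul[OF sub act_add[OF h] pi_in] by simp
    also have "\<dots> = 0" using k hom_zero[OF sub act_add[OF h]] by simp
    finally show ?thesis using k act_in[OF h pi_in] pi_hstar[OF h]
      by (auto simp: torsion_iff)
  qed
  ultimately show ?thesis by (simp add: W_def)
qed

definition key :: "(nat \<times> 'm) \<times> nat list \<Rightarrow> nat \<times> nat list" where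
  "key b = (idx (fst b), snd b)"

lemma key_inj: "b1 \<in> B n \<Longrightarrow> b2 \<in> B n' \<Longrightarrow> key b1 = key b2 \<Longrightarrow> b1 = b2"
  using idx unfolding key_def B_def inj_on_def by (simp add: prod_eq_iff)

lemma key_mono:
  assumes h: "FS_mor m n h" "ordered m h" and b: "b1 \<in> B n" "b2 \<in> B n"
    and lt: "key b1 < key b2"
  shows "key (compb h m b1) < key (compb h m b2)"
proof (cases "idx (fst b1) < idx (fst b2)")
  case True
  then show ?thesis by (simp add: key_def compb_def)
next
  case False
  then have eq: "idx (fst b1) = idx (fst b2)" and sl: "snd b1 < snd b2"
    using lt by (auto simp: key_def)
  have "wcomp h m (snd b1) < wcomp h m (snd b2)"
    using comp_mono[OF h _ _ sl] b by (simp add: B_def)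
  then show ?thesis using eq by (simp add: key_def compb_def)
qed

lemma compb_inj:
  assumes h: "FS_mor m n h" "ordered m h" and b: "z \<in> B n" "b \<in> B n"
    and eq: "compb h m z = compb h m b"
  shows "z = b"
proof (rule ccontr)
  assume "z \<noteq> b"
  then have "key z \<noteq> key b" using key_inj b by blast
  then have "key z < key b \<or> key b < key z" by auto
  then have "key (compb h m z) \<noteq> key (compb h m b)"
    using key_mono[OF h b] key_mono[OF h b(2,1)] by auto
  then show False using eq by simp
qed

definition lead :: "nat \<Rightarrow> ((nat \<times> 'm) \<times> nat list \<Rightarrow> int) \<Rightarrow> (nat \<times> 'm) \<times> nat list \<Rightarrow> bool" where
  "lead n c b \<longleftrightarrow> b \<in> B n \<and> c b \<noteq> 0 \<and> (\<forall>b'\<in>B n. key b < key b' \<longrightarrow> c b' = 0)"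

lemma hstar_lead:
  assumes h: "FS_mor m n h" "ordered m h" and l: "lead n c b"
  shows "lead m (hstar n m h c) (compb h m b) \<and> hstar n m h c (compb h m b) = c b"
proof -
  have bB: "b \<in> B n" using l by (simp add: lead_def)
  have "{z \<in> B n. compb h m z = compb h m b} = {b}"
    using compb_inj[OF h _ bB] bB by auto
  then have val: "hstar n m h c (compb h m b) = c b" by (simp add: hstar_def)
  have zero: "hstar n m h c b'' = 0" if b'': "b'' \<in> B m" "key (compb h m b) < key b''" for b''
    unfolding hstar_def
  proof (rule sum.neutral, intro ballI)
    fix z assume z: "z \<in> {z \<in> B n. compb h m z = b''}"
    show "c z = 0"
    proof (rule ccontr)
      assume cz: "c z \<noteq> 0"
      then have "\<not> key b < key z" using l z by (auto simp: lead_def)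
      then have "key z < key b \<or> key z = key b" by auto
      then show False
      proof
        assume "key z < key b"
        moreover have "z \<in> B n" "b'' = compb h m z" using z by auto
        ultimately have "key b'' < key (compb h m b)" using key_mono[OF h _ bB] by blast
        then show False using b'' by simp
      next
        assume "key z = key b"
        then have "z = b" using key_inj z bB by blast
        then show False using z b'' by simp
      qed
    qed
  qed
  show ?thesis using val zero l compb_in[OF h(1) bB] by (simp add: lead_def)
qed

end




definition enc :: "nat list \<Rightarrow> (nat \<times> nat set) list" where
  "enc w = map (\<lambda>i. (w ! i, set (take i w))) [0..<length w]"

lemma enc_length [simp]: "length (enc w) = length w"
  by (simp add: enc_def)

lemma enc_nth: "i < length w \<Longrightarrow> enc w ! i = (w ! i, set (take i w))"
  by (simp add: enc_def)

lemma enc_set: "set w = D \<Longrightarrow> set (enc w) \<subseteq> D \<times> Pow D"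
  by (auto simp: enc_def dest: in_set_takeD)

context fsm
begin

definition dvdb :: "(nat \<times> 'm) \<times> nat list \<Rightarrow> (nat \<times> 'm) \<times> nat list \<Rightarrow> bool" where
  "dvdb b b' \<longleftrightarrow> (\<exists>n m h. b \<in> B n \<and> b' \<in> B m \<and> FS_mor m n h \<and> ordered m h \<and> compb h m b = b')"

lemma enc_dvd:
  assumes b: "b \<in> B n" and b': "b' \<in> B m" and f: "fst b = fst b'"
    and sub: "subseq (enc (snd b)) (enc (snd b'))"
  shows "dvdb b b'"
proof -
  obtain p where p: "\<forall>k<length (enc (snd b)). p k < length (enc (snd b')) \<and> enc (snd b) ! k = enc (snd b') ! (p k)"
    "\<forall>k1 k2. k1 < k2 \<longrightarrow> k2 < length (enc (snd b)) \<longrightarrow> p k1 < p k2"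
    using list_emb_idx[OF sub] by blast
  have lu: "length (snd b) = n" and lv: "length (snd b') = m" using b b' by (auto simp: B_def)
  have sets: "set (snd b) = set (snd b')" using b b' f by (auto simp: B_def)
  have pp: "\<forall>k<n. p k < m \<and> snd b ! k = snd b' ! (p k) \<and> set (take k (snd b)) = set (take (p k) (snd b'))"
  proof (intro allI impI)
    fix k assume k: "k < n"
    then have "p k < m" "enc (snd b) ! k = enc (snd b') ! (p k)" using p(1) lu lv by auto
    then show "p k < m \<and> snd b ! k = snd b' ! (p k) \<and> set (take k (snd b)) = set (take (p k) (snd b'))"
      using k lu lv by (simp add: enc_nth)
  qed
  obtain h where h: "FS_mor m n h" "ordered m h" "wcomp h m (snd b) = snd b'"
    using emb_to_h[OF lu lv sets pp] p(2) lu by auto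
  have "compb h m b = b'" using h(3) f by (simp add: compb_def prod_eq_iff)
  then show ?thesis unfolding dvdb_def using b b' h by blast
qed

lemma wqo:
  fixes s :: "nat \<Rightarrow> (nat \<times> 'm) \<times> nat list"
  assumes s: "\<forall>i. \<exists>n. s i \<in> B n"
  shows "\<exists>i j. i < j \<and> dvdb (s i) (s j)"
proof -
  have "finite ((\<lambda>i. fst (s i)) ` UNIV)"
    by (rule finite_subset[OF _ finG]) (use s in \<open>auto simp: B_def\<close>)
  then obtain i0 where inf: "infinite {i. fst (s i) = fst (s i0)}"
    using pigeonhole_infinite[of "UNIV::nat set" "\<lambda>i. fst (s i)"] by auto
  define I where "I = {i. fst (s i) = fst (s i0)}"
  have infI: "infinite I" using inf unfolding I_def .
  define \<phi> where "\<phi> = enumerate I"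
  have smono: "strict_mono \<phi>" unfolding \<phi>_def using infI by (rule strict_mono_enumerate)
  have phiI: "fst (s (\<phi> k)) = fst (s i0)" for k using enumerate_in_set[OF infI, of k] unfolding \<phi>_def I_def by simp
  define d where "d = fst (fst (s i0))"
  have setd: "set (snd (s (\<phi> k))) = {1..d}" for k
  proof -
    obtain n where "s (\<phi> k) \<in> B n" using s by blast
    then show ?thesis using phiI[of k] by (simp add: B_def d_def)
  qed
  have "\<exists>i j. i < j \<and> subseq (enc (snd (s (\<phi> i)))) (enc (snd (s (\<phi> j))))"
  proof (rule higman[of "{1..d} \<times> Pow {1..d}"])
    show "\<forall>i. set (enc (snd (s (\<phi> i)))) \<subseteq> {1..d} \<times> Pow {1..d}"
      using setd enc_set by blast
  qed simp
  then obtain i j where ij: "i < j" "subseq (enc (snd (s (\<phi> i)))) (enc (snd (s (\<phi> j))))" by blast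
  obtain n where n: "s (\<phi> i) \<in> B n" using s by blast
  obtain m where m: "s (\<phi> j) \<in> B m" using s by blast
  have "dvdb (s (\<phi> i)) (s (\<phi> j))"
    using enc_dvd[OF n m _ ij(2)] phiI by simp
  moreover have "\<phi> i < \<phi> j" using smono ij(1) by (simp add: strict_mono_less)
  ultimately show ?thesis by blast
qed

definition L :: "(nat \<times> 'm) \<times> nat list \<Rightarrow> int set" where
  "L b = {c b | c. c \<in> W (length (snd b)) \<and> lead (length (snd b)) c b}"

definition S :: "((nat \<times> 'm) \<times> nat list) set" where
  "S = {b. L b \<noteq> {}}"

definition gv :: "(nat \<times> 'm) \<times> nat list \<Rightarrow> nat" where
  "gv b = (LEAST k::nat. 0 < k \<and> int k \<in> L b)"

lemma B_len: "b \<in> B n \<Longrightarrow> length (snd b) = n"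
  by (simp add: B_def)

lemma S_B: "b \<in> S \<Longrightarrow> b \<in> B (length (snd b))"
  by (auto simp: S_def L_def lead_def)

lemma L_neg: "z \<in> L b \<Longrightarrow> - z \<in> L b"
proof -
  assume "z \<in> L b"
  then obtain c where c: "c \<in> W (length (snd b))" "lead (length (snd b)) c b" "z = c b"
    unfolding L_def by blast
  have "(\<lambda>x. - c x) \<in> W (length (snd b))" using W_neg[OF c(1)] .
  moreover have "lead (length (snd b)) (\<lambda>x. - c x) b" using c(2) by (simp add: lead_def)
  ultimately show "- z \<in> L b" unfolding L_def using c(3) by force
qed

lemma L_nz: "z \<in> L b \<Longrightarrow> z \<noteq> 0"
  by (auto simp: L_def lead_def)

lemma gv_prop: "b \<in> S \<Longrightarrow> 0 < gv b \<and> int (gv b) \<in> L b"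
proof -
  assume "b \<in> S"
  then obtain z where z: "z \<in> L b" by (auto simp: S_def)
  have "int (nat \<bar>z\<bar>) \<in> L b" using z L_neg[OF z] by (cases "z \<ge> 0") auto
  moreover have "0 < nat \<bar>z\<bar>" using L_nz[OF z] by simp
  ultimately have "0 < nat \<bar>z\<bar> \<and> int (nat \<bar>z\<bar>) \<in> L b" by blast
  then show ?thesis unfolding gv_def by (rule LeastI)
qed

lemma gv_least: "0 < k \<Longrightarrow> int k \<in> L b \<Longrightarrow> gv b \<le> k"
  unfolding gv_def by (rule Least_le) simp

lemma gv_dvd:
  assumes bS: "b \<in> S" and z: "z \<in> L b"
  shows "int (gv b) dvd z"
proof -
  let ?n = "length (snd b)"
  obtain c where c: "c \<in> W ?n" "lead ?n c b" "z = c b" using z unfolding L_def by blast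
  obtain c0 where c0: "c0 \<in> W ?n" "lead ?n c0 b" "int (gv b) = c0 b"
    using gv_prop[OF bS] unfolding L_def by blast
  have g0: "0 < int (gv b)" using gv_prop[OF bS] by simp
  define q where "q = z div int (gv b)"
  define r where "r = z mod int (gv b)"
  have zr: "z = q * int (gv b) + r" unfolding q_def r_def by simp
  show ?thesis
  proof (rule ccontr)
    assume nd: "\<not> int (gv b) dvd z"
    then have r0: "r \<noteq> 0" unfolding r_def by (simp add: dvd_eq_mod_eq_0)
    have "0 \<le> r" using g0 unfolding r_def by (rule pos_mod_sign)
    then have rpos: "0 < r" using r0 by simp
    have rlt: "r < int (gv b)" using g0 unfolding r_def by simp
    define c' where "c' = (\<lambda>x. c x - q * c0 x)"
    have "c' \<in> W ?n" unfolding c'_def by (rule W_diff[OF c(1) c0(1)])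
    moreover have "c' b = r" using zr c(3) c0(3) by (simp add: c'_def)
    moreover have "lead ?n c' b"
      using c(2) c0(2) r0 \<open>c' b = r\<close> by (auto simp: lead_def c'_def)
    ultimately have "r \<in> L b" unfolding L_def by force
    then have "int (nat r) \<in> L b" using rpos by simp
    then have "gv b \<le> nat r" using gv_least[of "nat r" b] rpos by simp
    then show False using rlt rpos by linarith
  qed
qed

lemma gv_mono:
  assumes d: "dvdb b b'" and bS: "b \<in> S"
  shows "b' \<in> S \<and> gv b' \<le> gv b"
proof -
  obtain n m h where h: "b \<in> B n" "b' \<in> B m" "FS_mor m n h" "ordered m h" "compb h m b = b'"
    using d unfolding dvdb_def by blast
  have ln: "length (snd b) = n" and lm: "length (snd b') = m" using h B_len by auto
  obtain c0 where c0: "c0 \<in> W n" "lead n c0 b" "int (gv b) = c0 b"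
    using gv_prop[OF bS] ln unfolding L_def by blast
  have "hstar n m h c0 \<in> W m" using hstar_W[OF h(3) c0(1)] .
  moreover have "lead m (hstar n m h c0) b'" "hstar n m h c0 b' = c0 b"
    using hstar_lead[OF h(3,4) c0(2)] h(5) by auto
  ultimately have inL: "int (gv b) \<in> L b'" unfolding L_def using lm c0(3)
    by (intro CollectI exI[of _ "hstar n m h c0"]) simp
  then have "b' \<in> S" unfolding S_def by blast
  moreover have "gv b' \<le> gv b" using gv_least[OF _ inL] gv_prop[OF bS] by simp
  ultimately show ?thesis by blast
qed

definition R :: "(nat \<times> 'm) \<times> nat list \<Rightarrow> (nat \<times> 'm) \<times> nat list \<Rightarrow> bool" where
  "R y x \<longleftrightarrow> dvdb y x \<and> gv y = gv x"

lemma nonincr_stall: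
  fixes a :: "nat \<Rightarrow> nat"
  assumes "\<forall>k. a (Suc k) \<le> a k"
  shows "\<exists>k. a (Suc k) = a k"
proof (rule ccontr)
  assume "\<not> ?thesis"
  then have lt: "a (Suc k) < a k" for k using assms le_neq_implies_less by blast
  have "a k + k \<le> a 0" for k
  proof (induction k)
    case (Suc k) then show ?case using lt[of k] by simp
  qed simp
  from this[of "Suc (a 0)"] show False by simp
qed

lemma good:
  fixes s :: "nat \<Rightarrow> (nat \<times> 'm) \<times> nat list"
  assumes s: "\<forall>i. s i \<in> S"
  shows "\<exists>i j. i < j \<and> R (s i) (s j)"
proof -
  define f where "f X = (if dvdb (s (Min X)) (s (Max X)) then 0 else (1::nat))" for X
  have "\<exists>Y t. Y \<subseteq> UNIV \<and> infinite Y \<and> t < 2 \<and> (\<forall>x\<in>Y. \<forall>y\<in>Y. x \<noteq> y \<longrightarrow> f {x, y} = t)"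
    by (rule Ramsey2) (auto simp: f_def)
  then obtain Y t where Y: "infinite Y" "t < 2" "\<forall>x\<in>Y. \<forall>y\<in>Y. x \<noteq> y \<longrightarrow> f {x, y} = t" by blast
  define \<psi> where "\<psi> = enumerate Y"
  have smono: "strict_mono \<psi>" unfolding \<psi>_def using Y(1) by (rule strict_mono_enumerate)
  have psiY: "\<psi> k \<in> Y" for k unfolding \<psi>_def using enumerate_in_set[OF Y(1)] .
  have fij: "f {\<psi> i, \<psi> j} = t" if "i < j" for i j
    using Y(3) psiY smono that by (metis strict_mono_less less_irrefl)
  have fval: "f {\<psi> i, \<psi> j} = (if dvdb (s (\<psi> i)) (s (\<psi> j)) then 0 else 1)" if "i < j" for i j
  proof -
    have "\<psi> i < \<psi> j" using smono that by (simp add: strict_mono_less)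
    then have "Min {\<psi> i, \<psi> j} = \<psi> i" "Max {\<psi> i, \<psi> j} = \<psi> j" by auto
    then show ?thesis by (simp add: f_def)
  qed
  show ?thesis
  proof (cases "t = 0")
    case False
    have "\<exists>i j. i < j \<and> dvdb (s (\<psi> i)) (s (\<psi> j))"
      by (rule wqo) (use s S_B in blast)
    then obtain i j where "i < j" "dvdb (s (\<psi> i)) (s (\<psi> j))" by blast
    then show ?thesis using fij[of i j] fval[of i j] False by simp
  next
    case True
    have ch: "dvdb (s (\<psi> i)) (s (\<psi> j))" if "i < j" for i j
      using fij[OF that] fval[OF that] True by (simp split: if_splits)
    have "\<forall>k. gv (s (\<psi> (Suc k))) \<le> gv (s (\<psi> k))"
      using gv_mono ch s by blast
    then obtain k where k: "gv (s (\<psi> (Suc k))) = gv (s (\<psi> k))"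
      using nonincr_stall[of "\<lambda>k. gv (s (\<psi> k))"] by blast
    have "R (s (\<psi> k)) (s (\<psi> (Suc k)))" unfolding R_def using ch[of k "Suc k"] k by simp
    moreover have "\<psi> k < \<psi> (Suc k)" using smono by (simp add: strict_mono_less)
    ultimately show ?thesis by blast
  qed
qed

lemma finite_basis: "\<exists>F. finite F \<and> F \<subseteq> S \<and> (\<forall>x\<in>S. \<exists>y\<in>F. R y x)"
proof (rule ccontr)
  assume na: "\<not> ?thesis"
  have nb: "\<exists>x\<in>S. \<forall>y\<in>F. \<not> R y x" if "finite F" "F \<subseteq> S" for F
  proof -
    have "\<not> (\<forall>x\<in>S. \<exists>y\<in>F. R y x)" using na that by blast
    then show ?thesis by blast
  qed
  define nxt where "nxt p = (SOME x. x \<in> S \<and> (\<forall>y\<in>set p. \<not> R y x))" for p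
  define pr where "pr = rec_nat [] (\<lambda>k p. p @ [nxt p])"
  have pr0: "pr 0 = []" and prS: "pr (Suc k) = pr k @ [nxt (pr k)]" for k
    by (simp_all add: pr_def)
  have nxt_ok: "nxt p \<in> S \<and> (\<forall>y\<in>set p. \<not> R y (nxt p))" if "set p \<subseteq> S" for p
  proof -
    have "\<exists>x\<in>S. \<forall>y\<in>set p. \<not> R y x" using nb[of "set p"] that by simp
    then obtain x where "x \<in> S \<and> (\<forall>y\<in>set p. \<not> R y x)" by blast
    then show ?thesis unfolding nxt_def by (rule someI)
  qed
  have prS_sub: "set (pr k) \<subseteq> S" for k
  proof (induction k)
    case 0 then show ?case by (simp add: pr0)
  next
    case (Suc k) then show ?case using nxt_ok[OF Suc] by (simp add: prS)
  qed
  define s where "s k = nxt (pr k)" for k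
  have prset: "set (pr k) = s ` {..<k}" for k
  proof (induction k)
    case 0 then show ?case by (simp add: pr0)
  next
    case (Suc k) then show ?case by (simp add: prS s_def lessThan_Suc)
  qed
  have sS: "\<forall>i. s i \<in> S" using nxt_ok[OF prS_sub] by (simp add: s_def)
  obtain i j where ij: "i < j" "R (s i) (s j)" using good[OF sS] by blast
  have "s i \<in> set (pr j)" using ij(1) prset by auto
  then show False using nxt_ok[OF prS_sub[of j]] ij(2) by (simp add: s_def)
qed

end




context fsm
begin

definition wit :: "(nat \<times> 'm) \<times> nat list \<Rightarrow> (nat \<times> 'm) \<times> nat list \<Rightarrow> int" where
  "wit y = (SOME c. c \<in> W (length (snd y)) \<and> lead (length (snd y)) c y \<and> c y = int (gv y))"

lemma wit_prop:
  assumes "y \<in> S"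
  shows "wit y \<in> W (length (snd y)) \<and> lead (length (snd y)) (wit y) y \<and> wit y y = int (gv y)"
proof -
  obtain c where "c \<in> W (length (snd y))" "lead (length (snd y)) c y" "int (gv y) = c y"
    using gv_prop[OF assms] unfolding L_def by blast
  then have "\<exists>c. c \<in> W (length (snd y)) \<and> lead (length (snd y)) c y \<and> c y = int (gv y)" by auto
  then show ?thesis unfolding wit_def by (rule someI_ex)
qed

definition tk :: "(nat \<times> 'm) \<times> nat list \<Rightarrow> nat" where
  "tk y = (SOME k. k \<ge> 1 \<and> nsmul k (pi (length (snd y)) (wit y)) = 0)"

lemma tk_prop:
  assumes "y \<in> S"
  shows "tk y \<ge> 1 \<and> nsmul (tk y) (pi (length (snd y)) (wit y)) = 0"
proof -
  have "pi (length (snd y)) (wit y) \<in> torsion (V (length (snd y)))"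
    using wit_prop[OF assms] by (simp add: W_def)
  then have "\<exists>k. k \<ge> 1 \<and> nsmul k (pi (length (snd y)) (wit y)) = 0" by (simp add: torsion_iff)
  then show ?thesis unfolding tk_def by (rule someI_ex)
qed

lemma reduce:
  assumes F: "finite F" "F \<subseteq> S" "\<forall>x\<in>S. \<exists>y\<in>F. R y x"
  defines "e \<equiv> \<Prod>y\<in>F. tk y"
  shows "c \<in> W m \<Longrightarrow> nsmul e (pi m c) = 0"
proof -
  have ewit: "nsmul e (pi (length (snd y)) (wit y)) = 0" if y: "y \<in> F" for y
  proof -
    have "e = (\<Prod>z\<in>F - {y}. tk z) * tk y"
      unfolding e_def using prod.remove[OF F(1) y] by (simp add: mult.commute)
    then show ?thesis using tk_prop[of y] y F(2) by (auto simp: nsmul_mult)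
  qed
  define N where "N (c::(nat \<times> 'm) \<times> nat list \<Rightarrow> int) = card {b \<in> B m. \<exists>b0\<in>B m. c b0 \<noteq> 0 \<and> key b \<le> key b0}" for c
  have "\<forall>c. c \<in> W m \<longrightarrow> N c = k \<longrightarrow> nsmul e (pi m c) = 0" for k
  proof (induction k rule: less_induct)
    case (less k)
    show ?case
    proof (intro allI impI)
      fix c assume c: "c \<in> W m" and Nc: "N c = k"
      show "nsmul e (pi m c) = 0"
      proof (cases "\<forall>b\<in>B m. c b = 0")
        case True
        then have "pi m c = pi m (\<lambda>b. 0)" by (intro pi_cong) auto
        then show ?thesis by (simp add: pi_zero)
      next
        case False
        define supp where "supp = {b \<in> B m. c b \<noteq> 0}"
        have fs: "finite supp" unfolding supp_def using finite_B by simp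
        have ne: "supp \<noteq> {}" using False unfolding supp_def by auto
        have "Max (key ` supp) \<in> key ` supp" using fs ne by simp
        then obtain b1 where b1: "b1 \<in> supp" "key b1 = Max (key ` supp)" by auto
        have b1B: "b1 \<in> B m" and cb1: "c b1 \<noteq> 0" using b1 by (auto simp: supp_def)
        have above: "c b' = 0" if "b' \<in> B m" "key b1 < key b'" for b'
        proof (rule ccontr)
          assume "c b' \<noteq> 0"
          then have "b' \<in> supp" using that by (simp add: supp_def)
          then have "key b' \<le> Max (key ` supp)" using fs by simp
          then show False using that b1 by simp
        qed
        have lc: "lead m c b1" unfolding lead_def using b1B cb1 above by blast
        have lenb1: "length (snd b1) = m" using B_len[OF b1B] .
        have "c b1 \<in> L b1" unfolding L_def using c lc lenb1 by auto
        then have b1S: "b1 \<in> S" unfolding S_def by blast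
        obtain y where y: "y \<in> F" "R y b1" using F(3) b1S by blast
        then obtain n m' h where h: "y \<in> B n" "b1 \<in> B m'" "FS_mor m' n h" "ordered m' h" "compb h m' y = b1"
          unfolding R_def dvdb_def by blast
        have mm: "m' = m" using h(2) lenb1 B_len by blast
        have yS: "y \<in> S" using y F(2) by blast
        have leny: "length (snd y) = n" using B_len[OF h(1)] .
        have wy: "wit y \<in> W n" "lead n (wit y) y" "wit y y = int (gv y)"
          using wit_prop[OF yS] leny by auto
        define hs where "hs = hstar n m h (wit y)"
        have hsW: "hs \<in> W m" unfolding hs_def using hstar_W[OF h(3)[unfolded mm] wy(1)] .
        have hsl: "lead m hs b1" "hs b1 = int (gv y)"
          using hstar_lead[OF h(3,4)[unfolded mm] wy(2)] h(5) mm wy(3) by (auto simp: hs_def)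
        have gveq: "gv y = gv b1" using y(2) by (simp add: R_def)
        have "int (gv b1) dvd c b1" using gv_dvd[OF b1S \<open>c b1 \<in> L b1\<close>] .
        then obtain q0 where "c b1 = int (gv b1) * q0" by (rule dvdE)
        then have q: "c b1 = q0 * int (gv b1)" by (simp only: mult.commute)
        define q where "q = q0"
        note q = q[folded q_def]
        define c' where "c' = (\<lambda>b. c b - q * hs b)"
        have c'W: "c' \<in> W m" unfolding c'_def by (rule W_diff[OF c hsW])
        have c'b1: "c' b1 = 0" using q hsl gveq by (simp add: c'_def)
        have c'above: "c' b = 0" if "b \<in> B m" "key b1 < key b" for b
          using above[OF that] hsl(1) that by (simp add: c'_def lead_def)
        have c'supp: "key b0 < key b1" if "b0 \<in> B m" "c' b0 \<noteq> 0" for b0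
        proof -
          have "b0 \<noteq> b1" using that c'b1 by auto
          then have "key b0 \<noteq> key b1" using key_inj that(1) b1B by blast
          moreover have "\<not> key b1 < key b0" using c'above that by blast
          ultimately show ?thesis by auto
        qed
        have sub1: "{b \<in> B m. \<exists>b0\<in>B m. c' b0 \<noteq> 0 \<and> key b \<le> key b0} \<subseteq> {b \<in> B m. key b < key b1}"
          using c'supp by fastforce
        have sub2: "{b \<in> B m. key b < key b1} \<subset> {b \<in> B m. \<exists>b0\<in>B m. c b0 \<noteq> 0 \<and> key b \<le> key b0}"
        proof
          show "{b \<in> B m. key b < key b1} \<subseteq> {b \<in> B m. \<exists>b0\<in>B m. c b0 \<noteq> 0 \<and> key b \<le> key b0}"
            using b1B cb1 by fastforce
          have "b1 \<in> {b \<in> B m. \<exists>b0\<in>B m. c b0 \<noteq> 0 \<and> key b \<le> key b0}" using b1B cb1 by blast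
          moreover have "b1 \<notin> {b \<in> B m. key b < key b1}" by simp
          ultimately show "{b \<in> B m. key b < key b1} \<noteq> {b \<in> B m. \<exists>b0\<in>B m. c b0 \<noteq> 0 \<and> key b \<le> key b0}"
            by blast
        qed
        have "N c' < N c"
          unfolding N_def
          by (rule le_less_trans[OF card_mono psubset_card_mono])
             (use sub1 sub2 finite_B in auto)
        then have IH: "nsmul e (pi m c') = 0" using less.IH Nc c'W by blast
        have pic: "pi m c = pi m c' + zsmul q (pi m hs)"
          unfolding c'_def pi_diff_scale by simp
        have "pi m hs = act m n h (pi n (wit y))" unfolding hs_def using pi_hstar[OF h(3)[unfolded mm]] .
        then have "nsmul e (pi m hs) = act m n h (nsmul e (pi n (wit y)))"
          using hom_nsmul[OF sub act_add[OF h(3)[unfolded mm]] pi_in] by simp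
        also have "\<dots> = 0" using ewit[OF y(1)] leny hom_zero[OF sub act_add[OF h(3)[unfolded mm]]] by simp
        finally have "nsmul e (pi m hs) = 0" .
        then show ?thesis using IH unfolding pic by (simp add: nsmul_plus zsmul_nsmul[symmetric])
      qed
    qed
  qed
  then show "c \<in> W m \<Longrightarrow> nsmul e (pi m c) = 0" by blast
qed

definition U :: "nat \<Rightarrow> 'm set" where
  "U k = range (pi k)"

lemma U_subgrp: "subgrp (U n)"
  unfolding subgrp_def U_def
proof (intro conjI ballI)
  show "0 \<in> range (pi n)" using pi_zero[of n] by (metis rangeI)
  fix x y assume "x \<in> range (pi n)" "y \<in> range (pi n)"
  then obtain c1 c2 where "x = pi n c1" "y = pi n c2" by blast
  then have "x + y = pi n (\<lambda>b. c1 b + c2 b)" using pi_add by simp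
  then show "x + y \<in> range (pi n)" by simp
next
  fix x assume "x \<in> range (pi n)"
  then obtain c1 where "x = pi n c1" by blast
  then have "- x = pi n (\<lambda>b. - c1 b)" using pi_neg by simp
  then show "- x \<in> range (pi n)" by simp
qed

lemma U_submodule: "FSop_submodule V act U"
  unfolding FSop_submodule_def
proof (intro conjI allI impI)
  fix n
  show "U n \<subseteq> V n" unfolding U_def using pi_in by blast
  show "subgrp (U n)" by (rule U_subgrp)
next
  fix a b f x assume f: "FS_mor a b f" and x: "x \<in> U b"
  obtain c where "x = pi b c" using x unfolding U_def by blast
  then have "act a b f x = pi a (hstar b a f c)" using pi_hstar[OF f] by simp
  then show "act a b f x \<in> U a" unfolding U_def by simp
qed

lemma gen_in_U:
  assumes "(d, g) \<in> G"
  shows "g \<in> U d"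
proof -
  define b0 where "b0 = ((d, g), [1..<Suc d])"
  have "set [1..<Suc d] = {1..d}" by (simp only: set_upt atLeastLessThanSuc_atLeastAtMost)
  then have b0B: "b0 \<in> B d" using assms by (simp add: B_def b0_def del: upt_Suc)
  have "pi d (\<lambda>b. if b = b0 then 1 else 0) = (\<Sum>b\<in>B d. if b = b0 then vec d b else 0)"
    unfolding pi_def by (rule sum.cong) auto
  also have "\<dots> = vec d b0" using b0B finite_B by (simp add: sum.delta')
  also have "\<dots> = act d d id g"
  proof -
    have fs: "FS_mor d d (fw [1..<Suc d])" using B_FS[OF b0B] by (simp add: b0_def)
    have "\<forall>i\<in>{1..d}. fw [1..<Suc d] i = id i"
    proof
      fix i assume i: "i \<in> {1..d}"
      then have "1 + (i - 1) < Suc d" by auto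
      then have "[1..<Suc d] ! (i - 1) = 1 + (i - 1)" by (rule nth_upt)
      then show "fw [1..<Suc d] i = id i" using i by (simp add: fw_def del: upt_Suc)
    qed
    then show ?thesis unfolding vec_def b0_def using act_cong[OF fs] GV' assms by force
  qed
  also have "\<dots> = g" using act_id GV' assms by force
  finally have "pi d (\<lambda>b. if b = b0 then 1 else 0) = g" .
  then show ?thesis unfolding U_def by (metis rangeI)
qed

lemma U_eq: "U n = V n"
proof -
  have "\<forall>(n, x)\<in>G. x \<in> U n" using gen_in_U by blast
  then show ?thesis using gen U_submodule by blast
qed

theorem bounded:
  "\<exists>e::nat. e \<ge> 1 \<and> (\<forall>n. \<forall>x\<in>torsion (V n). nsmul e x = 0)"
proof -
  obtain F where F: "finite F" "F \<subseteq> S" "\<forall>x\<in>S. \<exists>y\<in>F. R y x" using finite_basis by blast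
  define e where "e = (\<Prod>y\<in>F. tk y)"
  have "e \<ge> 1" unfolding e_def using tk_prop F(2)
    by (metis (no_types, lifting) One_nat_def Suc_le_eq in_mono prod_pos)
  moreover have "nsmul e x = 0" if "x \<in> torsion (V n)" for n x
  proof -
    have "x \<in> U n" using that U_eq by (simp add: torsion_iff)
    then obtain c where xc: "x = pi n c" unfolding U_def by blast
    define c' where "c' b = (if b \<in> B n then c b else 0)" for b
    have "pi n c' = x" unfolding xc by (rule pi_cong) (simp add: c'_def)
    then have "c' \<in> W n" using that by (simp add: W_def c'_def)
    then show ?thesis using reduce[OF F] \<open>pi n c' = x\<close> e_def by blast
  qed
  ultimately show ?thesis by blast
qed

end



theorem mainTheorem8:
  fixes V :: "nat \<Rightarrow> 'm::ab_group_add set"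
    and act :: "nat \<Rightarrow> nat \<Rightarrow> (nat \<Rightarrow> nat) \<Rightarrow> 'm \<Rightarrow> 'm"
  assumes "FSop_module V act"
    and "FSop_fin_gen V act"
  shows "\<exists>e::nat. e \<ge> 1 \<and> (\<forall>n. \<forall>x\<in>torsion (V n). nsmul e x = 0)"
proof -
  obtain G where G: "finite G" "\<forall>(n, x)\<in>G. x \<in> V n"
    "\<forall>W. FSop_submodule V act W \<longrightarrow> (\<forall>(n, x)\<in>G. x \<in> W n) \<longrightarrow> (\<forall>n. W n = V n)"
    using assms(2) unfolding FSop_fin_gen_def by blast
  obtain idx :: "nat \<times> 'm \<Rightarrow> nat" where idx: "inj_on idx G"
    using finite_imp_inj_to_nat_seg[OF G(1)] by blast
  interpret fsm V act G idx
    using assms(1) G idx by unfold_locales auto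
  show ?thesis by (rule bounded)
qed

end
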